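(* In the setting of the context, suppose $G$ is an anchor subgraph and: (a) edges are $r$-driven; (b) the $T_r$ are independent Bernoulli random variables with probability $p\in(0,1)$; (c) $\{(a,r)\mid u_{ar}\neq0\}\subset G$; (d) $c_{ar}=\mathbb I((a,r)\in G)$; (e) $w_{ar}\neq0$ for all $(a,r)$; (f) $|\{r\mid u_{ar}\neq0\}|>0$ for all $a$. Then for every $a\in\mathcal A$, $$\mathrm{Cov}\left(\widehat{\mathcal W_a(\mathbf 1)}^c,\hat\beta^u_a\right)=0.$$
   Context: Setting (endogenous bipartite interference graph). $\mathcal A$ is a set of $n_a$ analysis units, $\mathcal R$ a set of $n_r$ randomization units. A random treatment vector $\mathbf T=(T_r)_{r\in\mathcal R}\in\{0,1\}^{n_r}$ is assigned; all randomness comes from $\mathbf T$. For each $(a,r)$ there is an unknown edge potential outcome function $E_{ar}:\{0,1\}^{n_r}\to\{0,1\}$ with observed realization $e_{ar}=E_{ar}(\mathbf T)$. Edges are $r$-driven if each $E_{ar}(\mathbf T)$ depends on $\mathbf T$ only through $T_r$. An anchor subgraph is a set $G\subset\mathcal A\times\mathcal R$ with $E_{ar}(\mathbf T)=1$ for all $\mathbf T$ and all $(a,r)\in G$. Outcome model: known real weights $w_{ar}$; $y_a=Y_a(\mathbf T)=\alpha_a+\beta_ax_a$, $x_a=\sum_rT_rE_{ar}(\mathbf T)w_{ar}$, unknown constants $\alpha_a,\beta_a$. Estimators: for fixed real weights $u_{ar},c_{ar}$, $z^u_a=\sum_rT_ru_{ar}$, $\hat\beta^u_a=y_a(z^u_a-\mathbb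 Ez^u_a)/\mathrm{Cov}(x_a,z^u_a)$, $\widehat{\mathcal W_a(\mathbf 1)}^c=\sum_r\left[\frac{T_rw_{ar}(e_{ar}-c_{ar})}{p}+w_{ar}c_{ar}\right]$. *)

theory Defs
  imports "HOL-Probability.Probability"
begin

text \<open>Treatment vectors T : R -> {0,1} are modelled as functions 'r => bool that are
  False outside the finite set R of randomization units.\<close>

definition treatments :: "'r set \<Rightarrow> ('r \<Rightarrow> bool) set" where
  "treatments R = {T. \<forall>r. r \<notin> R \<longrightarrow> \<not> T r}"

definition bern_design :: "'r set \<Rightarrow> real \<Rightarrow> ('r \<Rightarrow> bool) pmf" where
  "bern_design R p = Pi_pmf R False (\<lambda>_. bernoulli_pmf p)"

definition Ex :: "'t pmf \<Rightarrow> ('t \<Rightarrow> real) \<Rightarrow> real" where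
  "Ex M X = measure_pmf.expectation M X"

definition Cov :: "'t pmf \<Rightarrow> ('t \<Rightarrow> real) \<Rightarrow> ('t \<Rightarrow> real) \<Rightarrow> real" where
  "Cov M X Y = Ex M (\<lambda>t. (X t - Ex M X) * (Y t - Ex M Y))"

definition r_driven :: "'a set \<Rightarrow> 'r set \<Rightarrow> ('a \<Rightarrow> 'r \<Rightarrow> ('r \<Rightarrow> bool) \<Rightarrow> bool) \<Rightarrow> bool" where
  "r_driven A R E \<longleftrightarrow> (\<forall>a\<in>A. \<forall>r\<in>R. \<forall>T\<in>treatments R. \<forall>T'\<in>treatments R.
      T r = T' r \<longrightarrow> E a r T = E a r T')"

definition anchor_subgraph :: "'a set \<Rightarrow> 'r set \<Rightarrow> ('a \<Rightarrow> 'r \<Rightarrow> ('r \<Rightarrow> bool) \<Rightarrow> bool) \<Rightarrow> ('a \<times> 'r) set \<Rightarrow> bool" where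
  "anchor_subgraph A R E G \<longleftrightarrow> G \<subseteq> A \<times> R \<and> (\<forall>(a,r)\<in>G. \<forall>T\<in>treatments R. E a r T)"

definition exposure :: "'r set \<Rightarrow> ('a \<Rightarrow> 'r \<Rightarrow> ('r \<Rightarrow> bool) \<Rightarrow> bool) \<Rightarrow> ('a \<Rightarrow> 'r \<Rightarrow> real) \<Rightarrow> 'a \<Rightarrow> ('r \<Rightarrow> bool) \<Rightarrow> real" where
  "exposure R E w a T = (\<Sum>r\<in>R. of_bool (T r) * of_bool (E a r T) * w a r)"

definition outcome :: "'r set \<Rightarrow> ('a \<Rightarrow> 'r \<Rightarrow> ('r \<Rightarrow> bool) \<Rightarrow> bool) \<Rightarrow> ('a \<Rightarrow> 'r \<Rightarrow> real) \<Rightarrow> ('a \<Rightarrow> real) \<Rightarrow> ('a \<Rightarrow> real) \<Rightarrow> 'a \<Rightarrow> ('r \<Rightarrow> bool) \<Rightarrow> real" where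
  "outcome R E w \<alpha> \<beta> a T = \<alpha> a + \<beta> a * exposure R E w a T"

definition zu :: "'r set \<Rightarrow> ('a \<Rightarrow> 'r \<Rightarrow> real) \<Rightarrow> 'a \<Rightarrow> ('r \<Rightarrow> bool) \<Rightarrow> real" where
  "zu R u a T = (\<Sum>r\<in>R. of_bool (T r) * u a r)"

definition beta_hat :: "'r set \<Rightarrow> real \<Rightarrow> ('a \<Rightarrow> 'r \<Rightarrow> ('r \<Rightarrow> bool) \<Rightarrow> bool) \<Rightarrow> ('a \<Rightarrow> 'r \<Rightarrow> real) \<Rightarrow> ('a \<Rightarrow> real) \<Rightarrow> ('a \<Rightarrow> real) \<Rightarrow> ('a \<Rightarrow> 'r \<Rightarrow> real) \<Rightarrow> 'a \<Rightarrow> ('r \<Rightarrow> bool) \<Rightarrow> real" where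
  "beta_hat R p E w \<alpha> \<beta> u a T =
     outcome R E w \<alpha> \<beta> a T * (zu R u a T - Ex (bern_design R p) (zu R u a))
     / Cov (bern_design R p) (exposure R E w a) (zu R u a)"

definition W_hat :: "'r set \<Rightarrow> real \<Rightarrow> ('a \<Rightarrow> 'r \<Rightarrow> ('r \<Rightarrow> bool) \<Rightarrow> bool) \<Rightarrow> ('a \<Rightarrow> 'r \<Rightarrow> real) \<Rightarrow> ('a \<Rightarrow> 'r \<Rightarrow> real) \<Rightarrow> 'a \<Rightarrow> ('r \<Rightarrow> bool) \<Rightarrow> real" where
  "W_hat R p E w c a T =
     (\<Sum>r\<in>R. of_bool (T r) * w a r * (of_bool (E a r T) - c a r) / p + w a r * c a r)"

end

theory Submission imports Defs begin

lemma fin_Pi_bool: "finite S \<Longrightarrow> finite (set_pmf (Pi_pmf S False (Q :: 'r \<Rightarrow> bool pmf)))"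
  by (subst set_Pi_pmf) (auto intro!: finite_PiE_dflt)

lemma pair_prod_exp:
  fixes f :: "'x \<Rightarrow> real" and g :: "'y \<Rightarrow> real"
  assumes "finite (set_pmf P)" "finite (set_pmf P')"
  shows "measure_pmf.expectation (pair_pmf P P') (\<lambda>z. f (fst z) * g (snd z))
     = measure_pmf.expectation P f * measure_pmf.expectation P' g"
proof -
  have "measure_pmf.expectation (pair_pmf P P') (\<lambda>z. f (fst z) * g (snd z))
     = (\<Sum>z\<in>set_pmf P \<times> set_pmf P'. f (fst z) * g (snd z) * pmf (pair_pmf P P') z)"
    using assms by (intro integral_measure_pmf_real) auto
  also have "\<dots> = (\<Sum>x\<in>set_pmf P. \<Sum>y\<in>set_pmf P'. (f x * pmf P x) * (g y * pmf P' y))"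
    by (simp add: sum.cartesian_product mult_ac split_def) (intro sum.cong refl, metis pmf_pair prod.collapse)
  also have "\<dots> = (\<Sum>x\<in>set_pmf P. f x * pmf P x) * (\<Sum>y\<in>set_pmf P'. g y * pmf P' y)"
    by (simp add: sum_product)
  also have "\<dots> = measure_pmf.expectation P f * measure_pmf.expectation P' g"
    using assms by (simp add: integral_measure_pmf_real)
  finally show ?thesis .
qed

lemma indep_mult:
  fixes S N :: "'r set" and f g :: "('r \<Rightarrow> bool) \<Rightarrow> real" and Q :: "'r \<Rightarrow> bool pmf"
  assumes fin: "finite S" "finite N" and disj: "S \<inter> N = {}"
    and fS: "\<And>T T'. (\<forall>r\<in>S. T r = T' r) \<Longrightarrow> f T = f T'"
    and gN: "\<And>T T'. (\<forall>r\<in>N. T r = T' r) \<Longrightarrow> g T = g T'"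
  shows "Ex (Pi_pmf (S \<union> N) False Q) (\<lambda>T. f T * g T)
       = Ex (Pi_pmf (S \<union> N) False Q) f * Ex (Pi_pmf (S \<union> N) False Q) g"
proof -
  define h where "h = (\<lambda>(x::'r\<Rightarrow>bool, y::'r\<Rightarrow>bool) r. if r \<in> S then x r else y r)"
  define PP where "PP = pair_pmf (Pi_pmf S False Q) (Pi_pmf N False Q)"
  have eq: "Pi_pmf (S \<union> N) False Q = map_pmf h PP"
    unfolding h_def PP_def by (rule Pi_pmf_union[OF fin disj])
  have hf: "f (h z) = f (fst z)" for z
    by (cases z) (auto simp: h_def intro!: fS)
  have hg: "g (h z) = g (snd z)" for z
    using disj by (cases z) (auto simp: h_def intro!: gN)
  have finS: "finite (set_pmf (Pi_pmf S False Q))" "finite (set_pmf (Pi_pmf N False Q))"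
    using fin by (auto intro: fin_Pi_bool)
  have "Ex (Pi_pmf (S \<union> N) False Q) (\<lambda>T. f T * g T)
      = measure_pmf.expectation PP (\<lambda>z. f (fst z) * g (snd z))"
    unfolding Ex_def eq by (simp add: hf hg)
  also have "\<dots> = measure_pmf.expectation (Pi_pmf S False Q) f * measure_pmf.expectation (Pi_pmf N False Q) g"
    unfolding PP_def by (rule pair_prod_exp[OF finS])
  also have "Ex (Pi_pmf (S \<union> N) False Q) f = measure_pmf.expectation (Pi_pmf S False Q) f"
    unfolding Ex_def eq by (simp add: hf PP_def)
  moreover have "Ex (Pi_pmf (S \<union> N) False Q) g = measure_pmf.expectation (Pi_pmf N False Q) g"
    unfolding Ex_def eq by (simp add: hg PP_def)
  ultimately show ?thesis by simp
qed

lemma Ex_fin: "finite (set_pmf M) \<Longrightarrow> Ex M f = (\<Sum>x\<in>set_pmf M. f x * pmf M x)"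
  unfolding Ex_def by (rule integral_measure_pmf_real) auto

lemma Ex_const[simp]: "Ex M (\<lambda>_. c) = c"
  unfolding Ex_def by simp

lemma Ex_cong: "finite (set_pmf M) \<Longrightarrow> (\<And>x. x \<in> set_pmf M \<Longrightarrow> f x = g x) \<Longrightarrow> Ex M f = Ex M g"
  by (simp add: Ex_fin)

lemma Ex_add: "finite (set_pmf M) \<Longrightarrow> Ex M (\<lambda>x. f x + g x) = Ex M f + Ex M g"
  by (simp add: Ex_fin sum.distrib algebra_simps)

lemma Ex_diff: "finite (set_pmf M) \<Longrightarrow> Ex M (\<lambda>x. f x - g x) = Ex M f - Ex M g"
  by (simp add: Ex_fin sum_subtractf algebra_simps)

lemma Ex_cmult: "finite (set_pmf M) \<Longrightarrow> Ex M (\<lambda>x. c * f x) = c * Ex M f"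
  by (simp add: Ex_fin sum_distrib_left algebra_simps)

theorem lemma2:
  fixes A :: "'a set" and R :: "'r set" and p :: real
    and E :: "'a \<Rightarrow> 'r \<Rightarrow> ('r \<Rightarrow> bool) \<Rightarrow> bool"
    and w u c :: "'a \<Rightarrow> 'r \<Rightarrow> real" and \<alpha> \<beta> :: "'a \<Rightarrow> real"
    and G :: "('a \<times> 'r) set" and a :: 'a
  assumes "finite A" and "finite R"
    and anchor: "anchor_subgraph A R E G"
    and driven: "r_driven A R E"
    and p: "0 < p" "p < 1"
    and u_supp: "{(a', r). a' \<in> A \<and> r \<in> R \<and> u a' r \<noteq> 0} \<subseteq> G"
    and c_def: "\<forall>a'\<in>A. \<forall>r\<in>R. c a' r = of_bool ((a', r) \<in> G)"
    and w_nz: "\<forall>a'\<in>A. \<forall>r\<in>R. w a' r \<noteq> 0"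
    and u_nontriv: "\<forall>a'\<in>A. card {r\<in>R. u a' r \<noteq> 0} > 0"
    and "a \<in> A"
  shows "Cov (bern_design R p) (W_hat R p E w c a) (beta_hat R p E w \<alpha> \<beta> u a) = 0"
proof -
  define M where "M = bern_design R p"
  define S where "S = {r\<in>R. (a,r)\<in>G}"
  define N where "N = R - S"
  have finS: "finite S" "finite N" using \<open>finite R\<close> by (auto simp: S_def N_def)
  have RSN: "R = S \<union> N" "S \<inter> N = {}" by (auto simp: S_def N_def)
  have M_eq: "M = Pi_pmf (S \<union> N) False (\<lambda>_. bernoulli_pmf p)"
    unfolding M_def bern_design_def using RSN by simp
  have finM: "finite (set_pmf M)" unfolding M_eq using finS by (intro fin_Pi_bool) auto
  have supp: "T \<in> treatments R" if "T \<in> set_pmf M" for T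
    using set_Pi_pmf_subset[OF \<open>finite R\<close>, of False "\<lambda>_. bernoulli_pmf p"] that
    unfolding M_def bern_design_def treatments_def by auto
  define ft :: "'r \<Rightarrow> real" where "ft r = of_bool (E a r (\<lambda>s. s = r))" for r
  define WN where "WN T = (\<Sum>r\<in>N. of_bool (T r) * w a r * ft r / p)" for T :: "'r \<Rightarrow> bool"
  define K where "K = (\<Sum>r\<in>S. w a r)"
  define XS where "XS T = (\<Sum>r\<in>S. of_bool (T r) * w a r)" for T :: "'r \<Rightarrow> bool"
  define XN where "XN T = (\<Sum>r\<in>N. of_bool (T r) * ft r * w a r)" for T :: "'r \<Rightarrow> bool"
  define ZS where "ZS T = (\<Sum>r\<in>S. of_bool (T r) * u a r)" for T :: "'r \<Rightarrow> bool"
  have anc: "E a r T" if "r \<in> S" "T \<in> treatments R" for r T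
    using anchor that unfolding anchor_subgraph_def S_def by auto
  have drv: "of_bool (T r) * of_bool (E a r T) = (of_bool (T r) * ft r :: real)"
    if "r \<in> N" "T \<in> treatments R" for r T
  proof (cases "T r")
    case True
    have "(\<lambda>s. s = r) \<in> treatments R" using that by (auto simp: treatments_def N_def)
    then have "E a r T = E a r (\<lambda>s. s = r)"
    proof -
      have rR: "r \<in> R" using that(1) by (simp add: N_def)
      show ?thesis
        using driven[unfolded r_driven_def, rule_format, OF \<open>a \<in> A\<close> rR that(2) \<open>(\<lambda>s. s = r) \<in> treatments R\<close>] True
        by simp
    qed
    then show ?thesis by (simp add: ft_def)
  qed simp
  have cS: "c a r = 1" if "r \<in> S" for r using c_def \<open>a \<in> A\<close> that by (auto simp: S_def)
  have cN: "c a r = 0" if "r \<in> N" for r using c_def \<open>a \<in> A\<close> that by (auto simp: S_def N_def)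
  have W_eq: "W_hat R p E w c a T = K + WN T" if "T \<in> treatments R" for T
  proof -
    have "W_hat R p E w c a T = (\<Sum>r\<in>S. of_bool (T r) * w a r * (of_bool (E a r T) - c a r) / p + w a r * c a r)
      + (\<Sum>r\<in>N. of_bool (T r) * w a r * (of_bool (E a r T) - c a r) / p + w a r * c a r)"
      unfolding W_hat_def using RSN finS by (simp add: sum.union_disjoint)
    also have "(\<Sum>r\<in>S. of_bool (T r) * w a r * (of_bool (E a r T) - c a r) / p + w a r * c a r) = K"
      unfolding K_def using anc[OF _ that] cS by (intro sum.cong) auto
    also have "(\<Sum>r\<in>N. of_bool (T r) * w a r * (of_bool (E a r T) - c a r) / p + w a r * c a r) = WN T"
      unfolding WN_def
    proof (intro sum.cong refl)
      fix r assume r: "r \<in> N"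
      have "of_bool (T r) * w a r * (of_bool (E a r T) - c a r) / p + w a r * c a r
          = (of_bool (T r) * of_bool (E a r T)) * w a r / p" using cN[OF r] by simp
      also have "\<dots> = of_bool (T r) * w a r * ft r / p" using drv[OF r that] by simp
      finally show "of_bool (T r) * w a r * (of_bool (E a r T) - c a r) / p + w a r * c a r
          = of_bool (T r) * w a r * ft r / p" .
    qed
    finally show ?thesis .
  qed
  have X_eq: "exposure R E w a T = XS T + XN T" if "T \<in> treatments R" for T
  proof -
    have "exposure R E w a T = (\<Sum>r\<in>S. of_bool (T r) * of_bool (E a r T) * w a r)
       + (\<Sum>r\<in>N. of_bool (T r) * of_bool (E a r T) * w a r)"
      unfolding exposure_def using RSN finS by (simp add: sum.union_disjoint)
    also have "(\<Sum>r\<in>S. of_bool (T r) * of_bool (E a r T) * w a r) = XS T"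
      unfolding XS_def using anc[OF _ that] by (intro sum.cong) auto
    also have "(\<Sum>r\<in>N. of_bool (T r) * of_bool (E a r T) * w a r) = XN T"
      unfolding XN_def using drv[OF _ that] by (intro sum.cong) auto
    finally show ?thesis .
  qed
  have Z_eq: "zu R u a T = ZS T" for T
  proof -
    have "zu R u a T = (\<Sum>r\<in>S. of_bool (T r) * u a r) + (\<Sum>r\<in>N. of_bool (T r) * u a r)"
      unfolding zu_def by (subst RSN(1), rule sum.union_disjoint[OF finS RSN(2)])
    also have "(\<Sum>r\<in>N. of_bool (T r) * u a r) = 0"
      using u_supp \<open>a \<in> A\<close> by (intro sum.neutral) (auto simp: N_def S_def)
    finally show ?thesis by (simp add: ZS_def)
  qed
  define EZ where "EZ = Ex M (zu R u a)"
  define C where "C = Cov M (exposure R E w a) (zu R u a)"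
  define B where "B = beta_hat R p E w \<alpha> \<beta> u a"
  define EB where "EB = Ex M B"
  define D where "D T = WN T - Ex M WN" for T
  have EZ': "Ex M ZS = EZ" unfolding EZ_def Z_eq[abs_def] ..
  have B_eq: "B T = (\<alpha> a + \<beta> a * (XS T + XN T)) * (ZS T - EZ) / C" if "T \<in> treatments R" for T
    unfolding B_def beta_hat_def outcome_def M_def[symmetric] EZ_def C_def X_eq[OF that] Z_eq ..
  have EW: "Ex M (W_hat R p E w c a) = K + Ex M WN"
    using finM supp W_eq by (simp add: Ex_cong[of M _ "\<lambda>T. K + WN T"] Ex_add)
  have ED: "Ex M D = 0" unfolding D_def using finM by (simp add: Ex_diff)
  have indS: "Ex M (\<lambda>T. f T * g T) = Ex M f * Ex M g"
    if "\<And>T T'. (\<forall>r\<in>S. T r = T' r) \<Longrightarrow> f T = f T'" "\<And>T T'. (\<forall>r\<in>N. T r = T' r) \<Longrightarrow> g T = g T'"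
    for f g unfolding M_eq by (rule indep_mult[OF finS RSN(2) that])
  have Ddep: "D T = D T'" if "\<forall>r\<in>N. T r = T' r" for T T'
    unfolding D_def WN_def using that by simp
  have XNdep: "D T * XN T = D T' * XN T'" if "\<forall>r\<in>N. T r = T' r" for T T'
    using Ddep[OF that] that unfolding XN_def by simp
  have F1dep: "(\<alpha> a + \<beta> a * XS T) * (ZS T - EZ) = (\<alpha> a + \<beta> a * XS T') * (ZS T' - EZ)"
    if "\<forall>r\<in>S. T r = T' r" for T T'
    using that unfolding XS_def ZS_def by simp
  have Z0dep: "ZS T - EZ = ZS T' - EZ" if "\<forall>r\<in>S. T r = T' r" for T T'
    using that unfolding ZS_def by simp
  have E1: "Ex M (\<lambda>T. (\<alpha> a + \<beta> a * XS T) * (ZS T - EZ) * D T) = 0"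
    using indS[OF F1dep Ddep] ED by simp
  have E2: "Ex M (\<lambda>T. (ZS T - EZ) * (D T * XN T)) = 0"
    using indS[OF Z0dep XNdep] finM EZ' by (simp add: Ex_diff)
  have "Cov M (W_hat R p E w c a) B = Ex M (\<lambda>T. D T * (B T - EB))"
    unfolding Cov_def EB_def
    using finM supp W_eq EW by (intro Ex_cong) (auto simp: D_def)
  also have "\<dots> = Ex M (\<lambda>T. D T * B T) - EB * Ex M D"
    using finM by (simp add: right_diff_distrib Ex_diff Ex_cmult mult.commute)
  also have "Ex M (\<lambda>T. D T * B T) = Ex M (\<lambda>T. (1 / C) * ((\<alpha> a + \<beta> a * XS T) * (ZS T - EZ) * D T)
      + (\<beta> a / C) * ((ZS T - EZ) * (D T * XN T)))"
  proof (rule Ex_cong[OF finM])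
    fix T assume T: "T \<in> set_pmf M"
    show "D T * B T = (1 / C) * ((\<alpha> a + \<beta> a * XS T) * (ZS T - EZ) * D T)
      + (\<beta> a / C) * ((ZS T - EZ) * (D T * XN T))"
      unfolding B_eq[OF supp[OF T]] by (simp add: divide_inverse algebra_simps)
  qed
  also have "\<dots> = 0" by (simp only: Ex_add[OF finM] Ex_cmult[OF finM] E1 E2)
  finally show ?thesis using ED unfolding M_def B_def by simp
qed

end
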